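(* Let $M$ be a matroid such that the basis pair graph of each minor of $M$ is connected. Let $k\geq 2$ and let $S$ be a multiset of size $k\,r(M)$ whose elements lie in $E(M)$. If $G_M(S)$ is connected, then $G'_M(S)$ is connected.
   Context: For a matroid $N$, the basis pair graph $G(N)$ has as vertices the ordered triples $(A_1,A_2,A_3)$ of subsets of $E(N)$ with $A_1,A_2$ disjoint bases of $N$ and $A_3=E(N)-(A_1\cup A_2)$; two vertices $(A_1,A_2,A_3)$, $(B_1,B_2,B_3)$ are adjacent if $|A_1-B_1|+|A_2-B_2|+|A_3-B_3|=2$. The graph $G_M(S)$ has as vertices all multisets of $k$ bases of $M$ whose multiset union is $S$, two vertices being adjacent if one is obtained from the other by a symmetric exchange between two of its bases: replacing bases $B_i,B_j$ by $(B_i-b_i)\cup\{b_j\}$ and $(B_j-b_j)\cup\{b_i\}$ for some $b_i\in B_i-B_j$, $b_j\in B_j-B_i$. The graph $G'_M(S)$ is defined the same way but with ordered $k$-tuples $(B_1,\dots,B_k)$ of bases of $M$ (with multiset union $S$) as vertices: $(A_1,\dots,A_k)$ and $(B_1,\dots,B_k)$ are adjacent if for some $1\le i<j\le k$ and some $b_i\in B_i-B_j$, $b_j\in B_j-B_i$, the tuple $(A_1,\dots,A_k)$ is obtained from $(B_1,\dots,B_k)$ by replacing $B_i$ by $(B_i-b_i)\cup\{b_j\}$ and $B_j$ by $(B_j-b_j)\cup\{b_i\}$ (other coordinates unchanged). Empty graphs are regarded as connected. *)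

theory Defs
  imports Main "HOL-Library.Multiset"
begin

definition matroid :: "'a set \<Rightarrow> 'a set set \<Rightarrow> bool" where
  "matroid E \<I> \<longleftrightarrow> finite E \<and> (\<forall>X\<in>\<I>. X \<subseteq> E) \<and> {} \<in> \<I>
     \<and> (\<forall>X Y. Y \<in> \<I> \<and> X \<subseteq> Y \<longrightarrow> X \<in> \<I>)
     \<and> (\<forall>X Y. X \<in> \<I> \<and> Y \<in> \<I> \<and> card X < card Y \<longrightarrow> (\<exists>y\<in>Y - X. insert y X \<in> \<I>))"

definition mrank :: "'a set set \<Rightarrow> 'a set \<Rightarrow> nat" where
  "mrank \<I> X = Max {card Y | Y. Y \<subseteq> X \<and> Y \<in> \<I>}"

definition bases :: "'a set \<Rightarrow> 'a set set \<Rightarrow> 'a set set" where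
  "bases E \<I> = {B. B \<subseteq> E \<and> B \<in> \<I> \<and> (\<forall>X. X \<in> \<I> \<and> B \<subseteq> X \<longrightarrow> X = B)}"

text \<open>The minor M/C\D (C, D disjoint subsets of E): ground set and independent sets.\<close>
definition minor_ground :: "'a set \<Rightarrow> 'a set \<Rightarrow> 'a set \<Rightarrow> 'a set" where
  "minor_ground E C D = E - C - D"

definition minor_indep :: "'a set \<Rightarrow> 'a set set \<Rightarrow> 'a set \<Rightarrow> 'a set \<Rightarrow> 'a set set" where
  "minor_indep E \<I> C D = {X. X \<subseteq> E - C - D \<and> mrank \<I> (X \<union> C) = card X + mrank \<I> C}"

text \<open>Connectedness of a graph with vertex set V and adjacency relation adj
  (empty graph is connected).\<close>
definition graph_connected :: "'v set \<Rightarrow> ('v \<Rightarrow> 'v \<Rightarrow> bool) \<Rightarrow> bool" where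
  "graph_connected V adj \<longleftrightarrow>
     (\<forall>x\<in>V. \<forall>y\<in>V. (\<lambda>a b. a \<in> V \<and> b \<in> V \<and> adj a b)\<^sup>*\<^sup>* x y)"

definition bpg_vertices :: "'a set \<Rightarrow> 'a set set \<Rightarrow> ('a set \<times> 'a set \<times> 'a set) set" where
  "bpg_vertices E \<I> = {(A1, A2, A3). A1 \<in> bases E \<I> \<and> A2 \<in> bases E \<I> \<and> A1 \<inter> A2 = {}
      \<and> A3 = E - (A1 \<union> A2)}"

definition bpg_adj :: "('a set \<times> 'a set \<times> 'a set) \<Rightarrow> ('a set \<times> 'a set \<times> 'a set) \<Rightarrow> bool" where
  "bpg_adj A B \<longleftrightarrow> (case A of (A1, A2, A3) \<Rightarrow> case B of (B1, B2, B3) \<Rightarrow>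
      card (A1 - B1) + card (A2 - B2) + card (A3 - B3) = 2)"

definition basis_pair_graph_connected :: "'a set \<Rightarrow> 'a set set \<Rightarrow> bool" where
  "basis_pair_graph_connected E \<I> \<longleftrightarrow> graph_connected (bpg_vertices E \<I>) bpg_adj"

definition GM_vertices :: "'a set \<Rightarrow> 'a set set \<Rightarrow> nat \<Rightarrow> 'a multiset \<Rightarrow> 'a set multiset set" where
  "GM_vertices E \<I> k S = {X. size X = k \<and> (\<forall>B\<in>#X. B \<in> bases E \<I>)
      \<and> sum_mset (image_mset mset_set X) = S}"

definition GM_exch :: "'a set multiset \<Rightarrow> 'a set multiset \<Rightarrow> bool" where
  "GM_exch X Y \<longleftrightarrow> (\<exists>Bi Bj bi bj. {#Bi, Bj#} \<subseteq># X \<and> bi \<in> Bi - Bj \<and> bj \<in> Bj - Bi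
      \<and> Y = X - {#Bi, Bj#} + {#insert bj (Bi - {bi}), insert bi (Bj - {bj})#})"

definition GM_adj :: "'a set multiset \<Rightarrow> 'a set multiset \<Rightarrow> bool" where
  "GM_adj X Y \<longleftrightarrow> GM_exch X Y \<or> GM_exch Y X"

definition GM'_vertices :: "'a set \<Rightarrow> 'a set set \<Rightarrow> nat \<Rightarrow> 'a multiset \<Rightarrow> 'a set list set" where
  "GM'_vertices E \<I> k S = {L. length L = k \<and> (\<forall>B\<in>set L. B \<in> bases E \<I>)
      \<and> sum_list (map mset_set L) = S}"

definition GM'_exch :: "'a set list \<Rightarrow> 'a set list \<Rightarrow> bool" where
  "GM'_exch L L' \<longleftrightarrow> (\<exists>i j bi bj. i < j \<and> j < length L \<and> bi \<in> L ! i - L ! j \<and> bj \<in> L ! j - L ! i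
      \<and> L' = L[i := insert bj (L ! i - {bi}), j := insert bi (L ! j - {bj})])"

definition GM'_adj :: "'a set list \<Rightarrow> 'a set list \<Rightarrow> bool" where
  "GM'_adj X Y \<longleftrightarrow> GM'_exch X Y \<or> GM'_exch Y X"

end

theory Submission
  imports Defs
begin

lemma m_fin: "matroid E I \<Longrightarrow> finite E" by (simp add: matroid_def)
lemma m_sub: "matroid E I \<Longrightarrow> X \<in> I \<Longrightarrow> X \<subseteq> E" by (simp add: matroid_def)
lemma m_empty: "matroid E I \<Longrightarrow> {} \<in> I" by (simp add: matroid_def)
lemma m_down: assumes "matroid E I" "Y \<in> I" "X \<subseteq> Y" shows "X \<in> I"
proof -
  have h: "\<forall>X Y. Y \<in> I \<and> X \<subseteq> Y \<longrightarrow> X \<in> I" using assms(1) unfolding matroid_def by (elim conjE) assumption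
  show ?thesis using h assms(2,3) by blast
qed
lemma m_aug: assumes "matroid E I" "X \<in> I" "Y \<in> I" "card X < card Y" shows "\<exists>y\<in>Y-X. insert y X \<in> I"
proof -
  have h: "\<forall>X Y. X \<in> I \<and> Y \<in> I \<and> card X < card Y \<longrightarrow> (\<exists>y\<in>Y - X. insert y X \<in> I)"
    using assms(1) unfolding matroid_def by (elim conjE) assumption
  show ?thesis using h assms(2-4) by blast
qed
lemma m_finI: assumes "matroid E I" "X \<in> I" shows "finite X"
  using finite_subset[OF m_sub[OF assms] m_fin[OF assms(1)]] .

lemma basis_le: assumes "matroid E I" "B \<in> bases E I" "X \<in> I" shows "card X \<le> card B"
proof (rule ccontr)
  assume "\<not> ?thesis"
  then obtain y where y: "y \<in> X - B" "insert y B \<in> I"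
    using m_aug[OF assms(1) _ assms(3)] assms(2) unfolding bases_def by force
  then have "insert y B = B" using assms(2) unfolding bases_def by blast
  with y show False by blast
qed

lemma basis_of_card: assumes "matroid E I" "B \<in> bases E I" "X \<in> I" "card B \<le> card X"
  shows "X \<in> bases E I"
  unfolding bases_def
proof (intro CollectI conjI allI impI)
  show "X \<subseteq> E" using m_sub assms by blast
  show "X \<in> I" by fact
  fix Y assume Y: "Y \<in> I \<and> X \<subseteq> Y"
  show "Y = X"
  proof (rule ccontr)
    assume "Y \<noteq> X"
    then have "X \<subset> Y" using Y by blast
    then have "card X < card Y" using m_finI[OF assms(1)] Y psubset_card_mono by blast
    then have "card B < card Y" using assms(4) by simp
    then show False using basis_le[OF assms(1,2)] Y by fastforce
  qed
qed

lemma basis_card: "matroid E I \<Longrightarrow> B1 \<in> bases E I \<Longrightarrow> B2 \<in> bases E I \<Longrightarrow> card B1 = card B2"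
proof -
  assume a: "matroid E I" "B1 \<in> bases E I" "B2 \<in> bases E I"
  have "B1 \<in> I" "B2 \<in> I" using a unfolding bases_def by auto
  then have "card B1 \<le> card B2" "card B2 \<le> card B1" using basis_le a by blast+
  then show ?thesis by simp
qed

lemma mrank_fin: assumes "finite X" shows "finite {card Y |Y. Y \<subseteq> X \<and> Y \<in> I}"
proof -
  have "{card Y |Y. Y \<subseteq> X \<and> Y \<in> I} \<subseteq> card ` Pow X" by auto
  then show ?thesis using assms finite_subset by blast
qed

lemma mrank_indep: assumes "matroid E I" "X \<in> I" shows "mrank I X = card X"
  unfolding mrank_def
proof (rule Max_eqI)
  have fin: "finite X" using m_finI assms by blast
  show "finite {card Y |Y. Y \<subseteq> X \<and> Y \<in> I}" using mrank_fin[OF fin] .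
  show "y \<le> card X" if "y \<in> {card Y |Y. Y \<subseteq> X \<and> Y \<in> I}" for y
    using that fin card_mono by blast
  show "card X \<in> {card Y |Y. Y \<subseteq> X \<and> Y \<in> I}" using assms by blast
qed

lemma mrank_attain: assumes "matroid E I" "finite X"
  shows "\<exists>Y. Y \<subseteq> X \<and> Y \<in> I \<and> card Y = mrank I X"
proof -
  have ne: "{card Y |Y. Y \<subseteq> X \<and> Y \<in> I} \<noteq> {}" using m_empty[OF assms(1)] by blast
  have "mrank I X \<in> {card Y |Y. Y \<subseteq> X \<and> Y \<in> I}"
    unfolding mrank_def using Max_in[OF mrank_fin[OF assms(2)] ne] .
  then show ?thesis by auto
qed

lemma minor_indep_iff: assumes M: "matroid E I" and C: "C \<in> I" and X: "X \<subseteq> E - C - D"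
  shows "X \<in> minor_indep E I C D \<longleftrightarrow> X \<union> C \<in> I"
proof -
  have finX: "finite X" using X m_fin[OF M] finite_subset by blast
  have finC: "finite C" using m_finI[OF M C] .
  have cu: "card (X \<union> C) = card X + card C" using card_Un_disjoint[OF finX finC] X by blast
  have rC: "mrank I C = card C" using mrank_indep[OF M C] .
  show ?thesis
  proof
    assume "X \<in> minor_indep E I C D"
    then have r: "mrank I (X \<union> C) = card (X \<union> C)" unfolding minor_indep_def using cu rC by simp
    obtain Y where Y: "Y \<subseteq> X \<union> C" "Y \<in> I" "card Y = mrank I (X \<union> C)"
      using mrank_attain[OF M] finX finC by blast
    then have "Y = X \<union> C" using card_subset_eq[of "X \<union> C" Y] finX finC r by simp
    then show "X \<union> C \<in> I" using Y by simp
  next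
    assume "X \<union> C \<in> I"
    then show "X \<in> minor_indep E I C D" unfolding minor_indep_def
      using mrank_indep[OF M] X cu rC by simp
  qed
qed

lemma sum_list_mset: "sum_list (map f L) = sum_mset (image_mset f (mset L))"
  by (metis mset_map sum_mset_sum_list)

lemma V'_iff: "L \<in> GM'_vertices E I k S \<longleftrightarrow> mset L \<in> GM_vertices E I k S"
  unfolding GM'_vertices_def GM_vertices_def by (auto simp: sum_list_mset)

lemma mset_upd1: "i < length L \<Longrightarrow> mset (L[i:=a]) + {#L!i#} = mset L + {#a#}"
  by (simp add: mset_update)

lemma mset_upd2: assumes "i < length L" "j < length L" "i \<noteq> j"
  shows "mset (L[i:=a, j:=b]) + {#L!i, L!j#} = mset L + {#a, b#}"
proof -
  have "mset (L[i:=a, j:=b]) + {#L[i:=a]!j#} = mset (L[i:=a]) + {#b#}"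
    using mset_upd1[of j "L[i:=a]" b] assms by simp
  then have 1: "mset (L[i:=a, j:=b]) + {#L!j#} = mset (L[i:=a]) + {#b#}" using assms by simp
  have 2: "mset (L[i:=a]) + {#L!i#} = mset L + {#a#}" using mset_upd1 assms by simp
  have "mset (L[i:=a, j:=b]) + {#L!i, L!j#} = (mset (L[i:=a, j:=b]) + {#L!j#}) + {#L!i#}" by simp
  also have "\<dots> = mset (L[i:=a]) + {#L!i#} + {#b#}" using 1 by (simp add: add_ac)
  also have "\<dots> = mset L + {#a, b#}" using 2 by simp
  finally show ?thesis .
qed

lemma sum_swap: assumes "M' + {#x,y#} = M + {#a,b#}" "f x + f y = f a + f b"
  shows "sum_mset (image_mset f M') = sum_mset (image_mset (f::_\<Rightarrow> 'b::cancel_comm_monoid_add) M)"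
proof -
  have "sum_mset (image_mset f (M' + {#x,y#})) = sum_mset (image_mset f (M + {#a,b#}))"
    using assms(1) by simp
  then have "sum_mset (image_mset f M') + (f x + f y) = sum_mset (image_mset f M) + (f a + f b)"
    by (simp add: add_ac)
  then show ?thesis using assms(2) by simp
qed

lemma rtranclp_map:
  assumes "(\<lambda>a b. a \<in> V \<and> b \<in> V \<and> adj a b)\<^sup>*\<^sup>* x y" "x \<in> V"
    and "\<And>v. v \<in> V \<Longrightarrow> \<phi> v \<in> V'"
    and "\<And>v w. v \<in> V \<Longrightarrow> w \<in> V \<Longrightarrow> adj v w \<Longrightarrow> adj' (\<phi> v) (\<phi> w)"
  shows "(\<lambda>a b. a \<in> V' \<and> b \<in> V' \<and> adj' a b)\<^sup>*\<^sup>* (\<phi> x) (\<phi> y)"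
  using assms(1)
proof (induction rule: rtranclp_induct)
  case base then show ?case by simp
next
  case (step y z)
  have "adj' (\<phi> y) (\<phi> z)" using assms(4) step by blast
  moreover have "\<phi> y \<in> V'" "\<phi> z \<in> V'" using assms(3) step by blast+
  ultimately show ?case using step.IH rtranclp.rtrancl_into_rtrancl[OF step.IH, of "\<phi> z"] by blast
qed

lemma rtranclp_sym_restr:
  assumes "(\<lambda>a b. a \<in> V \<and> b \<in> V \<and> adj a b)\<^sup>*\<^sup>* x y" "\<And>a b. adj a b \<Longrightarrow> adj b a"
  shows "(\<lambda>a b. a \<in> V \<and> b \<in> V \<and> adj a b)\<^sup>*\<^sup>* y x"
  using assms(1)
proof (induction rule: rtranclp_induct)
  case base then show ?case by simp
next
  case (step y z)
  have "adj z y" using assms(2) step by blast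
  then show ?case using step converse_rtranclp_into_rtranclp[of "(\<lambda>a b. a \<in> V \<and> b \<in> V \<and> adj a b)" z y x] by blast
qed
lemma perm_reach:
  assumes swap: "\<And>L i j. L \<in> V' \<Longrightarrow> i < j \<Longrightarrow> j < length L \<Longrightarrow> R L (L[i := L!j, j := L!i])"
    and closed: "\<And>L L'. L \<in> V' \<Longrightarrow> mset L' = mset L \<Longrightarrow> L' \<in> V'"
    and refl: "\<And>L. R L L"
    and sym: "\<And>a b. R a b \<Longrightarrow> R b a"
    and trans: "\<And>a b c. R a b \<Longrightarrow> R b c \<Longrightarrow> R a c"
  shows "pre @ xs \<in> V' \<Longrightarrow> mset ys = mset xs \<Longrightarrow> R (pre @ xs) (pre @ ys)"
proof (induction xs arbitrary: pre ys)
  case Nil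
  then show ?case using refl by simp
next
  case (Cons a xs)
  have "a \<in> set ys" using Cons.prems(2) by (metis list.set_intros(1) set_mset_mset)
  then obtain q where q: "q < length ys" "ys ! q = a" by (meson in_set_conv_nth)
  define ys' where "ys' = ys[0 := ys!q, q := ys!0]"
  have len: "length ys' = length ys" unfolding ys'_def by simp
  have ne: "ys \<noteq> []" using q by auto
  have y0: "ys' ! 0 = a"
    unfolding ys'_def using q ne by (cases "q = 0") auto
  have mys': "mset ys' = mset ys" unfolding ys'_def using mset_swap[of q ys 0] q ne by simp
  obtain zs where zs: "ys' = a # zs" using y0 len ne by (cases ys') auto
  have mz: "mset zs = mset xs" using mys' zs Cons.prems(2) by simp
  have V1: "pre @ ys \<in> V'" using closed[OF Cons.prems(1)] Cons.prems(2) by simp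
  have V2: "(pre @ [a]) @ xs \<in> V'" using Cons.prems(1) by simp
  have R1: "R ((pre @ [a]) @ xs) ((pre @ [a]) @ zs)" using Cons.IH[OF V2 mz] .
  have R2: "R (pre @ ys) (pre @ ys')"
  proof (cases "q = 0")
    case True
    then show ?thesis unfolding ys'_def using refl by simp
  next
    case False
    have "(pre @ ys)[length pre := (pre @ ys) ! (length pre + q), length pre + q := (pre @ ys) ! length pre]
        = pre @ ys'"
      unfolding ys'_def using q ne False by (simp add: list_update_append nth_append)
    moreover have "R (pre @ ys) ((pre @ ys)[length pre := (pre @ ys) ! (length pre + q), length pre + q := (pre @ ys) ! length pre])"
      using swap[OF V1, of "length pre" "length pre + q"] q False by simp
    ultimately show ?thesis by simp
  qed
  have "R (pre @ a # xs) (pre @ ys')" using R1 zs by simp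
  then show ?case using R2 sym trans by blast
qed

lemma exch_sym: assumes "GM_exch Y X" shows "GM_exch X Y"
proof -
  obtain Bi Bj bi bj where e: "{#Bi, Bj#} \<subseteq># Y" "bi \<in> Bi - Bj" "bj \<in> Bj - Bi"
    "X = Y - {#Bi, Bj#} + {#insert bj (Bi - {bi}), insert bi (Bj - {bj})#}"
    using assms unfolding GM_exch_def by blast
  define Ni where "Ni = insert bj (Bi - {bi})"
  define Nj where "Nj = insert bi (Bj - {bj})"
  have neq: "bi \<noteq> bj" using e by blast
  have 1: "insert bi (Ni - {bj}) = Bi" unfolding Ni_def using e neq by blast
  have 2: "insert bj (Nj - {bi}) = Bj" unfolding Nj_def using e neq by blast
  have "X - {#Ni, Nj#} = Y - {#Bi, Bj#}" using e(4) unfolding Ni_def Nj_def by (simp add: add_mset_commute)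
  have YY: "Y = (Y - {#Bi, Bj#}) + {#Bi, Bj#}" using e(1) by (metis subset_mset.diff_add)
  have Y: "Y = X - {#Ni, Nj#} + {#insert bi (Ni - {bj}), insert bj (Nj - {bi})#}"
    using 1 2 YY \<open>X - {#Ni, Nj#} = Y - {#Bi, Bj#}\<close> e(1) by (simp add: subset_mset.diff_add)
  show ?thesis unfolding GM_exch_def
    apply (rule exI[of _ Ni], rule exI[of _ Nj], rule exI[of _ bj], rule exI[of _ bi])
    using Y e neq unfolding Ni_def Nj_def by auto
qed

lemma lift_exch: assumes "GM_exch X Y" "mset L = X"
  shows "\<exists>L'. mset L' = Y \<and> GM'_exch L L'"
proof -
  obtain Bi Bj bi bj where e: "{#Bi, Bj#} \<subseteq># X" "bi \<in> Bi - Bj" "bj \<in> Bj - Bi"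
    "Y = X - {#Bi, Bj#} + {#insert bj (Bi - {bi}), insert bi (Bj - {bj})#}"
    using assms unfolding GM_exch_def by blast
  have "Bi \<in># X" "Bj \<in># X" using e(1) by (auto dest: mset_subset_eqD)
  then have "Bi \<in> set L" "Bj \<in> set L" using assms(2) by auto
  then obtain i j where ij: "i < length L" "L ! i = Bi" "j < length L" "L ! j = Bj"
    by (meson in_set_conv_nth)
  have neq: "i \<noteq> j" using ij e by blast
  define Ni where "Ni = insert bj (Bi - {bi})"
  define Nj where "Nj = insert bi (Bj - {bj})"
  have key: "mset L' = Y" if "mset L' + {#Bi, Bj#} = mset L + {#Ni, Nj#}" for L'
  proof -
    have "X = (X - {#Bi, Bj#}) + {#Bi, Bj#}" using e(1) by (metis subset_mset.diff_add)
    then have "mset L = (X - {#Bi, Bj#}) + {#Bi, Bj#}" using assms(2) by simp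
    then have "mset L' + {#Bi, Bj#} = (X - {#Bi, Bj#}) + {#Ni, Nj#} + {#Bi, Bj#}" using that by (simp add: add_ac)
    then show ?thesis using e(4) unfolding Ni_def Nj_def by simp
  qed
  show ?thesis
  proof (cases "i < j")
    case True
    define L' where "L' = L[i := Ni, j := Nj]"
    have "mset L' + {#Bi, Bj#} = mset L + {#Ni, Nj#}"
      using mset_upd2[of i L j Ni Nj] ij neq unfolding L'_def by simp
    moreover have "GM'_exch L L'" unfolding GM'_exch_def L'_def Ni_def Nj_def
      using True ij e by blast
    ultimately show ?thesis using key by blast
  next
    case False
    then have ji: "j < i" using neq by simp
    define L' where "L' = L[j := Nj, i := Ni]"
    have "mset L' + {#Bj, Bi#} = mset L + {#Nj, Ni#}"
      using mset_upd2[of j L i Nj Ni] ij neq unfolding L'_def by simp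
    then have "mset L' + {#Bi, Bj#} = mset L + {#Ni, Nj#}" by (simp add: add_mset_commute)
    moreover have "GM'_exch L L'" unfolding GM'_exch_def L'_def Ni_def Nj_def
      using ji ij e by blast
    ultimately show ?thesis using key by blast
  qed
qed
lemma upd4: "i \<noteq> j \<Longrightarrow> L[i:=a, j:=b, i:=a', j:=b'] = L[i:=a', j:=b']"
  by (metis list_update_overwrite list_update_swap)

lemma swap_reach:
  assumes M: "matroid E I"
    and H: "\<forall>C D. C \<subseteq> E \<and> D \<subseteq> E \<and> C \<inter> D = {} \<longrightarrow>
           basis_pair_graph_connected (minor_ground E C D) (minor_indep E I C D)"
    and L: "L \<in> GM'_vertices E I k S" and ij: "i < j" "j < length L"
  shows "(\<lambda>a b. a \<in> GM'_vertices E I k S \<and> b \<in> GM'_vertices E I k S \<and> GM'_adj a b)\<^sup>*\<^sup>* L (L[i := L!j, j := L!i])"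
proof (cases "L!i = L!j")
  case True
  then have "L[i := L!j, j := L!i] = L" by (metis list_update_id)
  then show ?thesis by simp
next
  case False
  define V' where "V' = GM'_vertices E I k S"
  define P where "P = L!i"
  define Q where "Q = L!j"
  have PB: "P \<in> bases E I" "Q \<in> bases E I"
    using L ij unfolding GM'_vertices_def P_def Q_def by auto
  have PE: "P \<subseteq> E" "Q \<subseteq> E" "P \<in> I" "Q \<in> I" using PB unfolding bases_def by auto
  have finE: "finite E" using m_fin[OF M] .
  have finP: "finite P" "finite Q" using PE finE finite_subset by auto
  define C where "C = P \<inter> Q"
  define D where "D = E - (P \<union> Q)"
  define EN where "EN = minor_ground E C D"
  define IN where "IN = minor_indep E I C D"
  have EN_eq: "EN = (P - Q) \<union> (Q - P)" unfolding EN_def minor_ground_def C_def D_def using PE by auto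
  have ENC: "EN \<inter> C = {}" unfolding EN_eq C_def by auto
  have finEN: "finite EN" "finite C" using EN_eq finP C_def by auto
  have CI: "C \<in> I" using m_down[OF M PE(3)] C_def by auto
  have CDs: "C \<subseteq> E" "D \<subseteq> E" "C \<inter> D = {}" using PE unfolding C_def D_def by auto
  have conn: "basis_pair_graph_connected EN IN" using H CDs unfolding EN_def IN_def by blast
  have cardPQ: "card P = card Q" using basis_card[OF M PB] .
  have PC: "(P - Q) \<union> C = P" "(Q - P) \<union> C = Q" unfolding C_def by auto
  have cP: "card P = card (P - Q) + card C"
    using card_Un_disjoint[of "P - Q" C] finP finEN PC unfolding C_def by auto
  have cQ: "card Q = card (Q - P) + card C"
    using card_Un_disjoint[of "Q - P" C] finP finEN PC unfolding C_def by auto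
  have cPQ: "card (Q - P) = card (P - Q)" using cP cQ cardPQ by simp
  have cEN: "card EN = card (P - Q) + card (Q - P)"
    unfolding EN_eq using card_Un_disjoint[of "P - Q" "Q - P"] finP by auto
  have INsub: "X \<in> IN \<Longrightarrow> X \<subseteq> EN" for X
    unfolding IN_def EN_def minor_indep_def minor_ground_def by auto
  have INiff: "X \<subseteq> EN \<Longrightarrow> X \<in> IN \<longleftrightarrow> X \<union> C \<in> I" for X
    using minor_indep_iff[OF M CI, of X D] unfolding IN_def EN_def minor_ground_def by blast
  have toN: "A \<in> bases EN IN" if A: "A \<subseteq> EN" "A \<union> C \<in> bases E I" for A
    unfolding bases_def
  proof (intro CollectI conjI allI impI)
    show "A \<subseteq> EN" by fact
    show "A \<in> IN" using INiff[OF A(1)] A(2) unfolding bases_def by auto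
    fix X assume X: "X \<in> IN \<and> A \<subseteq> X"
    have XE: "X \<subseteq> EN" using INsub X by blast
    have "X \<union> C \<in> I" using INiff[OF XE] X by blast
    then have "X \<union> C = A \<union> C" using A(2) X unfolding bases_def by blast
    then show "X = A" using XE A(1) ENC by blast
  qed
  have bN1: "P - Q \<in> bases EN IN" using toN[of "P - Q"] PC PB EN_eq by auto
  have bN2: "Q - P \<in> bases EN IN" using toN[of "Q - P"] PC PB EN_eq by auto
  have fromN: "A \<union> C \<in> bases E I \<and> card A = card (P - Q)" if A: "A \<in> bases EN IN" for A
  proof -
    have AE: "A \<subseteq> EN" and AI: "A \<in> IN" using A unfolding bases_def by auto
    have ACI: "A \<union> C \<in> I" using INiff[OF AE] AI by blast
    have finA: "finite A" using AE finEN finite_subset by blast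
    have cAC: "card (A \<union> C) = card A + card C"
      using card_Un_disjoint[OF finA finEN(2)] AE ENC by blast
    have le: "card (A \<union> C) \<le> card P" using basis_le[OF M PB(1) ACI] .
    have ge: "card P \<le> card (A \<union> C)"
    proof (rule ccontr)
      assume "\<not> ?thesis"
      then obtain y where y: "y \<in> P - (A \<union> C)" "insert y (A \<union> C) \<in> I"
        using m_aug[OF M ACI PE(3)] by force
      have yEN: "y \<in> EN" using y EN_eq C_def by auto
      have "insert y A \<subseteq> EN" using yEN AE by auto
      moreover have "insert y A \<union> C \<in> I" using y(2) by simp
      ultimately have "insert y A \<in> IN" using INiff by blast
      then have "insert y A = A" using A unfolding bases_def by blast
      then show False using y by blast
    qed
    have "A \<union> C \<in> bases E I" using basis_of_card[OF M PB(1) ACI] ge by simp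
    moreover have "card A = card (P - Q)" using le ge cAC cP by simp
    ultimately show ?thesis by blast
  qed
  have vert: "A1 \<union> C \<in> bases E I \<and> A2 \<union> C \<in> bases E I \<and> A1 \<union> A2 = EN \<and> A1 \<inter> A2 = {}
      \<and> A1 \<subseteq> EN \<and> A2 \<subseteq> EN \<and> A3 = {} \<and> card A1 = card (P - Q)"
    if v: "(A1, A2, A3) \<in> bpg_vertices EN IN" for A1 A2 A3
  proof -
    from v have b1: "A1 \<in> bases EN IN" and b2: "A2 \<in> bases EN IN" and dj: "A1 \<inter> A2 = {}"
      and a3: "A3 = EN - (A1 \<union> A2)"
      unfolding bpg_vertices_def by auto
    have s: "A1 \<subseteq> EN" "A2 \<subseteq> EN" using b1 b2 unfolding bases_def by auto
    have f: "finite A1" "finite A2" using s finEN finite_subset by auto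
    have "card (A1 \<union> A2) = card EN"
      using fromN[OF b1] fromN[OF b2] card_Un_disjoint[OF f dj] cEN cPQ by simp
    moreover have "A1 \<union> A2 \<subseteq> EN" using s by simp
    ultimately have u: "A1 \<union> A2 = EN" using card_subset_eq[OF finEN(1)] by metis
    show ?thesis using fromN[OF b1] fromN[OF b2] u dj s a3 by simp
  qed
  have msetsum: "mset_set (A1 \<union> C) + mset_set (A2 \<union> C) = mset_set EN + mset_set C + mset_set C"
    if "A1 \<union> A2 = EN" "A1 \<inter> A2 = {}" "A1 \<subseteq> EN" "A2 \<subseteq> EN" for A1 A2
  proof -
    have f: "finite A1" "finite A2" using that finEN finite_subset by auto
    have "mset_set (A1 \<union> C) = mset_set A1 + mset_set C"
      using mset_set_Union[OF f(1) finEN(2)] that ENC by blast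
    moreover have "mset_set (A2 \<union> C) = mset_set A2 + mset_set C"
      using mset_set_Union[OF f(2) finEN(2)] that ENC by blast
    moreover have "mset_set EN = mset_set A1 + mset_set A2"
      using mset_set_Union[OF f that(2)] that(1) by simp
    ultimately show ?thesis by (simp add: add_ac)
  qed
  have msPQ: "mset_set P + mset_set Q = mset_set EN + mset_set C + mset_set C"
    using msetsum[of "P - Q" "Q - P"] PC EN_eq by auto
  define phi where "phi = (\<lambda>(A1::'a set, A2::'a set, A3::'a set). L[i := A1 \<union> C, j := A2 \<union> C])"
  have ilen: "i < length L" using ij by simp
  have phiV: "phi v \<in> V'" if "v \<in> bpg_vertices EN IN" for v
  proof -
    obtain A1 A2 A3 where v: "v = (A1, A2, A3)" by (cases v)
    have vv: "A1 \<union> C \<in> bases E I \<and> A2 \<union> C \<in> bases E I \<and> A1 \<union> A2 = EN \<and> A1 \<inter> A2 = {}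
      \<and> A1 \<subseteq> EN \<and> A2 \<subseteq> EN" using vert that v by blast
    have pv: "phi v = L[i := A1 \<union> C, j := A2 \<union> C]" unfolding phi_def v by simp
    have len: "length (phi v) = k" using L unfolding GM'_vertices_def pv by simp
    have "set (phi v) \<subseteq> insert (A2 \<union> C) (insert (A1 \<union> C) (set L))"
      unfolding pv using set_update_subset_insert[of "L[i:=A1 \<union> C]" j "A2 \<union> C"]
        set_update_subset_insert[of L i "A1 \<union> C"] by blast
    then have bs: "\<forall>B\<in>set (phi v). B \<in> bases E I" using vv L unfolding GM'_vertices_def by blast
    have ms: "mset (phi v) + {#P, Q#} = mset L + {#A1 \<union> C, A2 \<union> C#}"
      using mset_upd2[OF ilen ij(2)] ij unfolding pv P_def Q_def by simp
    have eq: "mset_set P + mset_set Q = mset_set (A1 \<union> C) + mset_set (A2 \<union> C)"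
      using msetsum[of A1 A2] vv msPQ by simp
    have "sum_list (map mset_set (phi v)) = sum_list (map mset_set L)"
      unfolding sum_list_mset using sum_swap[OF ms eq] .
    then show ?thesis using len bs L unfolding V'_def GM'_vertices_def by simp
  qed
  have phiA: "GM'_adj (phi v) (phi w)"
    if vw: "v \<in> bpg_vertices EN IN" "w \<in> bpg_vertices EN IN" "bpg_adj v w" for v w
  proof -
    obtain A1 A2 A3 where v: "v = (A1, A2, A3)" by (cases v)
    obtain B1 B2 B3 where w: "w = (B1, B2, B3)" by (cases w)
    have va: "A1 \<union> A2 = EN \<and> A1 \<inter> A2 = {} \<and> A1 \<subseteq> EN \<and> A2 \<subseteq> EN \<and> A3 = {} \<and> card A1 = card (P - Q)"
      using vert vw(1) v by blast
    have wb: "B1 \<union> B2 = EN \<and> B1 \<inter> B2 = {} \<and> B1 \<subseteq> EN \<and> B2 \<subseteq> EN \<and> B3 = {} \<and> card B1 = card (P - Q)"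
      using vert vw(2) w by blast
    have c: "card (A1 - B1) + card (A2 - B2) = 2" using vw(3) va wb unfolding bpg_adj_def v w by simp
    have e: "A2 - B2 = B1 - A1" using va wb by blast
    have fA: "finite A1" "finite B1" using va wb finEN finite_subset by auto
    have "card (A1 - B1) = card (B1 - A1)"
      using card_Diff_subset_Int[of A1 B1] card_Diff_subset_Int[of B1 A1] fA va wb
      by (simp add: Int_commute)
    then have c1: "card (A1 - B1) = 1" "card (B1 - A1) = 1" using c e by simp_all
    obtain x where x: "A1 - B1 = {x}" using c1(1) card_1_singletonE by blast
    obtain y where y: "B1 - A1 = {y}" using c1(2) card_1_singletonE by blast
    have xA: "x \<in> A1" "x \<notin> B1" using x by auto
    have yB: "y \<in> B1" "y \<notin> A1" using y by auto
    have B1eq: "B1 = insert y (A1 - {x})" using x y by blast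
    have xyEN: "x \<in> EN" "y \<in> EN" using xA(1) yB(1) va wb by (simp_all add: subset_iff)
    have xC: "x \<notin> C" "y \<notin> C" using xyEN ENC by blast+
    have xA2: "x \<notin> A2" using xA va by blast
    have yA2: "y \<in> A2" using yB va wb by blast
    have A2e: "A2 = EN - A1" using va by blast
    have B2e: "B2 = EN - B1" using wb by blast
    have xEN: "x \<in> EN" using xA va by blast
    have B2eq: "B2 = insert x (A2 - {y})" unfolding B2e A2e B1eq using xEN xA yB by auto
    have n1: "insert y ((A1 \<union> C) - {x}) = B1 \<union> C" using B1eq xC by blast
    have n2: "insert x ((A2 \<union> C) - {y}) = B2 \<union> C" using B2eq xC by blast
    have pv: "phi v = L[i := A1 \<union> C, j := A2 \<union> C]" unfolding phi_def v by simp
    have pw: "phi w = L[i := B1 \<union> C, j := B2 \<union> C]" unfolding phi_def w by simp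
    have i1: "phi v ! i = A1 \<union> C" "phi v ! j = A2 \<union> C" "length (phi v) = length L"
      unfolding pv using ij by auto
    have upd: "phi w = (phi v)[i := insert y (phi v ! i - {x}), j := insert x (phi v ! j - {y})]"
      unfolding i1 n1 n2 unfolding pv pw using upd4[of i j L] ij by simp
    have "GM'_exch (phi v) (phi w)" unfolding GM'_exch_def
      apply (rule exI[of _ i], rule exI[of _ j], rule exI[of _ x], rule exI[of _ y])
      using ij i1 upd xA xA2 yA2 yB xC by auto
    then show ?thesis unfolding GM'_adj_def by blast
  qed
  let ?s = "(P - Q, Q - P, EN - ((P - Q) \<union> (Q - P)))"
  let ?t = "(Q - P, P - Q, EN - ((Q - P) \<union> (P - Q)))"
  have st: "?s \<in> bpg_vertices EN IN" "?t \<in> bpg_vertices EN IN"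
    using bN1 bN2 unfolding bpg_vertices_def by auto
  have path: "(\<lambda>a b. a \<in> bpg_vertices EN IN \<and> b \<in> bpg_vertices EN IN \<and> bpg_adj a b)\<^sup>*\<^sup>* ?s ?t"
    using conn st unfolding basis_pair_graph_connected_def graph_connected_def by blast
  have "(\<lambda>a b. a \<in> V' \<and> b \<in> V' \<and> GM'_adj a b)\<^sup>*\<^sup>* (phi ?s) (phi ?t)"
    by (rule rtranclp_map[OF path st(1)]) (use phiV phiA in auto)
  moreover have "phi ?s = L" unfolding phi_def using PC unfolding P_def Q_def by simp
  moreover have "phi ?t = L[i := L!j, j := L!i]" unfolding phi_def using PC unfolding P_def Q_def by simp
  ultimately show ?thesis unfolding V'_def by simp
qed
lemma perm_reach2:
  assumes swap: "\<And>L i j. L \<in> V' \<Longrightarrow> i < j \<Longrightarrow> j < length L \<Longrightarrow> R L (L[i := L!j, j := L!i])"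
    and closed: "\<And>L L'. L \<in> V' \<Longrightarrow> mset L' = mset L \<Longrightarrow> L' \<in> V'"
    and refl: "\<And>L. R L L"
    and sym: "\<And>a b. R a b \<Longrightarrow> R b a"
    and trans: "\<And>a b c. R a b \<Longrightarrow> R b c \<Longrightarrow> R a c"
    and L: "L \<in> V'" "mset L' = mset L"
  shows "R L L'"
proof -
  have "R ([] @ L) ([] @ L')"
    apply (rule perm_reach[where V'=V' and R=R])
        apply (rule swap; assumption)
       apply (rule closed; assumption)
      apply (rule refl)
     apply (rule sym; assumption)
    apply (rule trans; assumption)
    using L by simp_all
  then show ?thesis by simp
qed

lemma lift_path:
  assumes path: "(\<lambda>a b. a \<in> V \<and> b \<in> V \<and> GM_adj a b)\<^sup>*\<^sup>* X Y"
    and L1: "L1 \<in> V'" "mset L1 = X"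
    and iff: "\<And>L. L \<in> V' \<longleftrightarrow> mset L \<in> V"
  shows "\<exists>L. L \<in> V' \<and> mset L = Y \<and> (\<lambda>a b. a \<in> V' \<and> b \<in> V' \<and> GM'_adj a b)\<^sup>*\<^sup>* L1 L"
  using path
proof (induction rule: rtranclp_induct)
  case base
  then show ?case using L1 by blast
next
  case (step Y Z)
  then obtain L where L: "L \<in> V'" "mset L = Y" "(\<lambda>a b. a \<in> V' \<and> b \<in> V' \<and> GM'_adj a b)\<^sup>*\<^sup>* L1 L"
    by blast
  have "GM_exch Y Z" using step(2) exch_sym unfolding GM_adj_def by blast
  then obtain L' where L': "mset L' = Z" "GM'_exch L L'" using lift_exch L(2) by blast
  have L'V: "L' \<in> V'" using L' step(2) iff by blast
  have "GM'_adj L L'" using L'(2) unfolding GM'_adj_def by blast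
  then have "(\<lambda>a b. a \<in> V' \<and> b \<in> V' \<and> GM'_adj a b)\<^sup>*\<^sup>* L1 L'"
    using L(3) L(1) L'V rtranclp.rtrancl_into_rtrancl[of _ L1 L L'] by blast
  then show ?case using L' L'V by blast
qed
theorem theorem2p5:
  fixes E :: "'a set" and \<I> :: "'a set set" and k :: nat and S :: "'a multiset"
  assumes "matroid E \<I>"
    and "\<forall>C D. C \<subseteq> E \<and> D \<subseteq> E \<and> C \<inter> D = {} \<longrightarrow>
           basis_pair_graph_connected (minor_ground E C D) (minor_indep E \<I> C D)"
    and "k \<ge> 2"
    and "size S = k * mrank \<I> E"
    and "set_mset S \<subseteq> E"
    and "graph_connected (GM_vertices E \<I> k S) GM_adj"
  shows "graph_connected (GM'_vertices E \<I> k S) GM'_adj"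
proof -
  define V where "V = GM_vertices E \<I> k S"
  define V' where "V' = GM'_vertices E \<I> k S"
  define R where "R = (\<lambda>a b. a \<in> V' \<and> b \<in> V' \<and> GM'_adj a b)\<^sup>*\<^sup>*"
  have adjsym: "\<And>a b. GM'_adj a b \<Longrightarrow> GM'_adj b a" unfolding GM'_adj_def by blast
  have Rsym: "\<And>a b. R a b \<Longrightarrow> R b a"
    unfolding R_def using rtranclp_sym_restr[of V' GM'_adj] adjsym by blast
  have Rtrans: "\<And>a b c. R a b \<Longrightarrow> R b c \<Longrightarrow> R a c" unfolding R_def by simp
  have Rrefl: "\<And>a. R a a" unfolding R_def by simp
  have iff: "\<And>L. L \<in> V' \<longleftrightarrow> mset L \<in> V" unfolding V'_def V_def by (rule V'_iff)
  have closed: "\<And>L L'. L \<in> V' \<Longrightarrow> mset L' = mset L \<Longrightarrow> L' \<in> V'"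
    using iff by metis
  have swap: "\<And>L i j. L \<in> V' \<Longrightarrow> i < j \<Longrightarrow> j < length L \<Longrightarrow> R L (L[i := L!j, j := L!i])"
    unfolding R_def V'_def using swap_reach[OF assms(1) assms(2)] by blast
  show ?thesis unfolding graph_connected_def
  proof (intro ballI)
    fix L1 L2 assume L1: "L1 \<in> GM'_vertices E \<I> k S" and L2: "L2 \<in> GM'_vertices E \<I> k S"
    have m: "mset L1 \<in> V" "mset L2 \<in> V" using L1 L2 V'_iff unfolding V_def by blast+
    have path: "(\<lambda>a b. a \<in> V \<and> b \<in> V \<and> GM_adj a b)\<^sup>*\<^sup>* (mset L1) (mset L2)"
      using assms(6) m unfolding graph_connected_def V_def by blast
    obtain L where L: "L \<in> V'" "mset L = mset L2" "R L1 L"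
      using lift_path[OF path, of L1 V'] L1 iff unfolding R_def V'_def by blast
    have L2': "mset L2 = mset L" using L(2) by simp
    have "R L L2" by (rule perm_reach2[where V'=V' and R=R, OF swap closed Rrefl Rsym Rtrans L(1) L2'])
    then have "R L1 L2" using L(3) Rtrans by blast
    then show "(\<lambda>a b. a \<in> GM'_vertices E \<I> k S \<and> b \<in> GM'_vertices E \<I> k S \<and> GM'_adj a b)\<^sup>*\<^sup>* L1 L2"
      unfolding R_def V'_def .
  qed
qed
end
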